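(* Let $a\in\mathbb C^*$ with $a\neq\pm1$. Then for every $L\ge1$ the map $s_{a,L}$ induces a Lie algebra isomorphism $\mathfrak{OA}_{a,L}\cong(\mathbb C[u]/u^L\mathbb C[u])\otimes\mathfrak{sl}_2$, and $s_a$ induces an isomorphism $\widehat{\mathfrak{OA}}_a\cong\mathfrak{sl}_2[[u]]$ which carries $\widehat{\mathfrak{OA}}_a^L$ onto $u^L\mathfrak{sl}_2[[u]]$ for every $L\ge0$.
   Context: Work over $\mathbb C$. $\mathfrak{sl}_2$ has basis $e,f,h$ with $[e,f]=h$, $[h,e]=2e$, $[h,f]=-2f$. $L(\mathfrak{sl}_2)=\mathbb C[t,t^{-1}]\otimes\mathfrak{sl}_2$ is the loop algebra with bracket $[p(t)x,q(t)y]=p(t)q(t)[x,y]$. The Onsager algebra is the Lie subalgebra $\mathfrak{OA}=\{p(t)e+p(t^{-1})f+q(t)h:\ p,q\in\mathbb C[t,t^{-1}],\ q(t^{-1})=-q(t)\}$ of $L(\mathfrak{sl}_2)$. For $a\in\mathbb C^*$, $U_a(t)=t^2-(a+a^{-1})t+1$ if $a^2\neq1$ and $U_a(t)=t-a$ if $a=\pm1$. For a reciprocal polynomial $P$ (nonconstant monic with $P(t)=\pm t^{\deg P}P(t^{-1})$), $\mathfrak I_{P(t)}=\{p(t)e+p(t^{-1})f+q(t)h\in\mathfrak{OA}:\ p(t),q(t)\in P(t)\mathbb C[t,t^{-1}]\}$. For $a\in\mathbb C^*$ and $L\ge1$ let $\mathfrak{OA}_{a,L}=\mathfrak{OA}/\mathfrak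 I_{U_a(t)^L}$, and $\mathfrak{OA}_{a,0}=0$; for $L\ge K$ there are canonical surjections $\mathfrak{OA}_{a,L}\to\mathfrak{OA}_{a,K}$. $\widehat{\mathfrak{OA}}_a=\varprojlim_L\mathfrak{OA}_{a,L}$ is the inverse limit Lie algebra, $\psi_{a,L}:\widehat{\mathfrak{OA}}_a\to\mathfrak{OA}_{a,L}$ the canonical map, and $\widehat{\mathfrak{OA}}_a^L=\ker\psi_{a,L}$. For $a\in\mathbb C^*$, $s_a:\mathfrak{OA}\to\mathfrak{sl}_2[[u]]=\mathbb C[[u]]\otimes\mathfrak{sl}_2$ is the Lie homomorphism given by Taylor expansion at $t=a$ in $u=t-a$: $p(t)x\mapsto\sum_{j\ge0}\frac{p^{(j)}(a)}{j!}u^jx$; $s_{a,L}$ is its composition with the projection to $\mathfrak{sl}_2[[u]]/u^L\mathfrak{sl}_2[[u]]\cong(\mathbb C[u]/u^L\mathbb C[u])\otimes\mathfrak{sl}_2$. *)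

theory Defs
  imports "HOL-Analysis.Analysis" "HOL-Computational_Algebra.Computational_Algebra"
begin

section \<open>Laurent polynomials C[t,t^-1] as finitely supported coefficient functions\<close>

type_synonym lpoly = "int \<Rightarrow> complex"

definition is_lpoly :: "lpoly \<Rightarrow> bool" where
  "is_lpoly c \<longleftrightarrow> finite {k. c k \<noteq> 0}"

definition lp_add :: "lpoly \<Rightarrow> lpoly \<Rightarrow> lpoly" where
  "lp_add c d = (\<lambda>k. c k + d k)"

definition lp_neg :: "lpoly \<Rightarrow> lpoly" where
  "lp_neg c = (\<lambda>k. - c k)"

definition lp_smult :: "complex \<Rightarrow> lpoly \<Rightarrow> lpoly" where
  "lp_smult z c = (\<lambda>k. z * c k)"

definition lp_mult :: "lpoly \<Rightarrow> lpoly \<Rightarrow> lpoly" where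
  "lp_mult c d = (\<lambda>n. \<Sum>k\<in>{k. c k \<noteq> 0}. c k * d (n - k))"

definition lp_refl :: "lpoly \<Rightarrow> lpoly" where
  "lp_refl c = (\<lambda>k. c (- k))"

definition lp_of_poly :: "complex poly \<Rightarrow> lpoly" where
  "lp_of_poly P = (\<lambda>k. if 0 \<le> k then coeff P (nat k) else 0)"

text \<open>evaluation of a Laurent polynomial at t (meaningful for t \<noteq> 0)\<close>
definition lp_eval :: "lpoly \<Rightarrow> complex \<Rightarrow> complex" where
  "lp_eval c t = (\<Sum>k\<in>{k. c k \<noteq> 0}. c k * t powi k)"

definition lp_in_ideal :: "complex poly \<Rightarrow> lpoly \<Rightarrow> bool" where
  "lp_in_ideal P c \<longleftrightarrow> (\<exists>r. is_lpoly r \<and> c = lp_mult (lp_of_poly P) r)"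

section \<open>Loop algebra L(sl2): triples (A,B,C) meaning A e + B f + C h\<close>

type_synonym loop = "lpoly \<times> lpoly \<times> lpoly"

definition loop_carrier :: "loop set" where
  "loop_carrier = {(A, B, C). is_lpoly A \<and> is_lpoly B \<and> is_lpoly C}"

definition loop_add :: "loop \<Rightarrow> loop \<Rightarrow> loop" where
  "loop_add x y = (case x of (a, b, c) \<Rightarrow> case y of (a', b', c') \<Rightarrow>
     (lp_add a a', lp_add b b', lp_add c c'))"

definition loop_smult :: "complex \<Rightarrow> loop \<Rightarrow> loop" where
  "loop_smult z x = (case x of (a, b, c) \<Rightarrow> (lp_smult z a, lp_smult z b, lp_smult z c))"

text \<open>[e,f]=h, [h,e]=2e, [h,f]=-2f, extended C[t,t^-1]-bilinearly\<close>
definition loop_br :: "loop \<Rightarrow> loop \<Rightarrow> loop" where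
  "loop_br x y = (case x of (a, b, c) \<Rightarrow> case y of (a', b', c') \<Rightarrow>
     (lp_smult 2 (lp_add (lp_mult c a') (lp_neg (lp_mult a c'))),
      lp_smult 2 (lp_add (lp_mult b c') (lp_neg (lp_mult c b'))),
      lp_add (lp_mult a b') (lp_neg (lp_mult b a'))))"

definition loop_zero :: loop where
  "loop_zero = ((\<lambda>_. 0), (\<lambda>_. 0), (\<lambda>_. 0))"

definition OA :: "loop set" where
  "OA = {(p, lp_refl p, q) | p q. is_lpoly p \<and> is_lpoly q \<and> lp_refl q = lp_neg q}"

definition OA_ideal :: "complex poly \<Rightarrow> loop set" where
  "OA_ideal P = {x \<in> OA. lp_in_ideal P (fst x) \<and> lp_in_ideal P (snd (snd x))}"

definition U :: "complex \<Rightarrow> complex poly" where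
  "U a = (if a\<^sup>2 \<noteq> 1 then [:1, - (a + inverse a), 1:] else [:- a, 1:])"

text \<open>kernel of OA \<rightarrow> OA_{a,L}; for L = 0, OA_{a,0} = 0 so the kernel is all of OA\<close>
definition OA_ker :: "complex \<Rightarrow> nat \<Rightarrow> loop set" where
  "OA_ker a L = (if L = 0 then OA else OA_ideal (U a ^ L))"

definition OA_coset :: "complex \<Rightarrow> nat \<Rightarrow> loop \<Rightarrow> loop set" where
  "OA_coset a L x = {loop_add x y | y. y \<in> OA_ker a L}"

definition OA_quot :: "complex \<Rightarrow> nat \<Rightarrow> loop set set" where
  "OA_quot a L = OA_coset a L ` OA"

section \<open>Inverse limit: compatible families of cosets\<close>

definition OA_hat :: "complex \<Rightarrow> (nat \<Rightarrow> loop set) set" where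
  "OA_hat a = {X. \<forall>L. X L \<in> OA_quot a L \<and> (\<forall>K\<le>L. \<forall>x\<in>X L. X K = OA_coset a K x)}"

definition hat_add :: "complex \<Rightarrow> (nat \<Rightarrow> loop set) \<Rightarrow> (nat \<Rightarrow> loop set) \<Rightarrow> nat \<Rightarrow> loop set" where
  "hat_add a X Y = (\<lambda>L. \<Union>{OA_coset a L (loop_add x y) | x y. x \<in> X L \<and> y \<in> Y L})"

definition hat_smult :: "complex \<Rightarrow> complex \<Rightarrow> (nat \<Rightarrow> loop set) \<Rightarrow> nat \<Rightarrow> loop set" where
  "hat_smult a z X = (\<lambda>L. \<Union>{OA_coset a L (loop_smult z x) | x. x \<in> X L})"

definition hat_br :: "complex \<Rightarrow> (nat \<Rightarrow> loop set) \<Rightarrow> (nat \<Rightarrow> loop set) \<Rightarrow> nat \<Rightarrow> loop set" where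
  "hat_br a X Y = (\<lambda>L. \<Union>{OA_coset a L (loop_br x y) | x y. x \<in> X L \<and> y \<in> Y L})"

text \<open>kernel of psi_{a,L}: X L is the zero coset, i.e. the ideal itself\<close>
definition hat_ker :: "complex \<Rightarrow> nat \<Rightarrow> (nat \<Rightarrow> loop set) set" where
  "hat_ker a L = {X \<in> OA_hat a. X L = OA_ker a L}"

section \<open>sl2[[u]]: triples of power series (coefficients of e, f, h)\<close>

type_synonym sl2ps = "complex fps \<times> complex fps \<times> complex fps"

definition ps_add :: "sl2ps \<Rightarrow> sl2ps \<Rightarrow> sl2ps" where
  "ps_add x y = (case x of (a, b, c) \<Rightarrow> case y of (a', b', c') \<Rightarrow> (a + a', b + b', c + c'))"

definition ps_smult :: "complex \<Rightarrow> sl2ps \<Rightarrow> sl2ps" where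
  "ps_smult z x = (case x of (a, b, c) \<Rightarrow> (fps_const z * a, fps_const z * b, fps_const z * c))"

definition ps_br :: "sl2ps \<Rightarrow> sl2ps \<Rightarrow> sl2ps" where
  "ps_br x y = (case x of (a, b, c) \<Rightarrow> case y of (a', b', c') \<Rightarrow>
     (2 * (c * a' - a * c'), 2 * (b * c' - c * b'), a * b' - b * a'))"

definition ps_uL :: "nat \<Rightarrow> sl2ps set" where
  "ps_uL L = {(fps_X ^ L * A, fps_X ^ L * B, fps_X ^ L * C) | A B C. True}"

text \<open>projection sl2[[u]] \<rightarrow> sl2[[u]]/u^L sl2[[u]] = (C[u]/u^L) \<otimes> sl2, canonical representatives\<close>
definition ps_trunc :: "nat \<Rightarrow> sl2ps \<Rightarrow> sl2ps" where
  "ps_trunc L x = (case x of (a, b, c) \<Rightarrow> (fps_cutoff L a, fps_cutoff L b, fps_cutoff L c))"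

definition taylor :: "complex \<Rightarrow> lpoly \<Rightarrow> complex fps" where
  "taylor a p = Abs_fps (\<lambda>j. (deriv ^^ j) (lp_eval p) a / fact j)"

definition s_map :: "complex \<Rightarrow> loop \<Rightarrow> sl2ps" where
  "s_map a x = (case x of (A, B, C) \<Rightarrow> (taylor a A, taylor a B, taylor a C))"

definition s_mapL :: "complex \<Rightarrow> nat \<Rightarrow> loop \<Rightarrow> sl2ps" where
  "s_mapL a L x = ps_trunc L (s_map a x)"

end

theory Submission
  imports Defs "HOL-Complex_Analysis.Complex_Analysis"
begin


abbreviation supp :: "lpoly \<Rightarrow> int set" where "supp c \<equiv> {k. c k \<noteq> 0}"

lemma lp_eval_superset:
  assumes "finite S" "supp c \<subseteq> S"
  shows "lp_eval c t = (\<Sum>k\<in>S. c k * t powi k)"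
  unfolding lp_eval_def
  by (rule sum.mono_neutral_left) (use assms in auto)

lemma is_lpoly_add [simp]: "is_lpoly c \<Longrightarrow> is_lpoly d \<Longrightarrow> is_lpoly (lp_add c d)"
  unfolding is_lpoly_def lp_add_def
  by (rule finite_subset[of _ "supp c \<union> supp d"]) auto

lemma is_lpoly_neg [simp]: "is_lpoly c \<Longrightarrow> is_lpoly (lp_neg c)"
  unfolding is_lpoly_def lp_neg_def by simp

lemma is_lpoly_smult [simp]: "is_lpoly c \<Longrightarrow> is_lpoly (lp_smult z c)"
  unfolding is_lpoly_def lp_smult_def
  by (rule finite_subset[of _ "supp c"]) auto

lemma is_lpoly_refl [simp]: "is_lpoly c \<Longrightarrow> is_lpoly (lp_refl c)"
  unfolding is_lpoly_def lp_refl_def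
proof -
  assume "finite (supp c)"
  then have "finite (uminus ` supp c)" by simp
  moreover have "{k. c (- k) \<noteq> 0} \<subseteq> uminus ` supp c" by (auto intro!: image_eqI[of _ _ "- _"])
  ultimately show "finite {k. c (- k) \<noteq> 0}" by (rule finite_subset[rotated])
qed

lemma lp_refl_refl [simp]: "lp_refl (lp_refl c) = c"
  unfolding lp_refl_def by simp

lemma supp_mult: "supp (lp_mult c d) \<subseteq> (\<lambda>(i,j). i + j) ` (supp c \<times> supp d)"
proof
  fix n assume "n \<in> supp (lp_mult c d)"
  then have "(\<Sum>k\<in>supp c. c k * d (n - k)) \<noteq> 0" by (simp add: lp_mult_def)
  then obtain k where "k \<in> supp c" "d (n - k) \<noteq> 0"
    by (metis (mono_tags, lifting) mult_zero_right sum.neutral)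
  then show "n \<in> (\<lambda>(i,j). i + j) ` (supp c \<times> supp d)"
    by (intro image_eqI[of _ _ "(k, n - k)"]) auto
qed

lemma is_lpoly_mult [simp]: "is_lpoly c \<Longrightarrow> is_lpoly d \<Longrightarrow> is_lpoly (lp_mult c d)"
  unfolding is_lpoly_def
  by (rule finite_subset[OF supp_mult]) auto

lemma supp_of_poly: "supp (lp_of_poly P) \<subseteq> int ` {..degree P}"
proof
  fix k assume "k \<in> supp (lp_of_poly P)"
  then have "0 \<le> k" "coeff P (nat k) \<noteq> 0" by (auto simp: lp_of_poly_def split: if_splits)
  then show "k \<in> int ` {..degree P}"
    by (intro image_eqI[of _ _ "nat k"]) (auto intro: le_degree)
qed

lemma is_lpoly_of_poly [simp]: "is_lpoly (lp_of_poly P)"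
  unfolding is_lpoly_def by (rule finite_subset[OF supp_of_poly]) auto

lemma lp_eval_add: "is_lpoly c \<Longrightarrow> is_lpoly d \<Longrightarrow> lp_eval (lp_add c d) t = lp_eval c t + lp_eval d t"
  unfolding is_lpoly_def
  apply (subst (1 2 3) lp_eval_superset[of "supp c \<union> supp d"])
  by (auto simp: lp_add_def sum.distrib algebra_simps)

lemma lp_eval_neg: "lp_eval (lp_neg c) t = - lp_eval c t"
  unfolding lp_eval_def lp_neg_def by (simp add: sum_negf)

lemma lp_eval_smult: "is_lpoly c \<Longrightarrow> lp_eval (lp_smult z c) t = z * lp_eval c t"
  unfolding is_lpoly_def
  apply (subst (1 2) lp_eval_superset[of "supp c"])
  by (auto simp: lp_smult_def sum_distrib_left algebra_simps)

lemma lp_eval_refl: "is_lpoly c \<Longrightarrow> lp_eval (lp_refl c) t = lp_eval c (inverse t)"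
proof -
  assume c: "is_lpoly c"
  have "lp_eval (lp_refl c) t = (\<Sum>k\<in>supp (lp_refl c). c (- k) * t powi k)"
    by (simp add: lp_eval_def lp_refl_def)
  also have "\<dots> = (\<Sum>k\<in>uminus ` supp (lp_refl c). c k * t powi (- k))"
    by (subst sum.reindex) (auto simp: inj_on_def)
  also have "uminus ` supp (lp_refl c) = supp c"
    by (auto simp: lp_refl_def image_iff intro!: exI[of _ "- _"])
  also have "(\<Sum>k\<in>supp c. c k * t powi (- k)) = lp_eval c (inverse t)"
    by (simp add: lp_eval_def power_int_minus power_int_inverse)
  finally show ?thesis .
qed

lemma lp_eval_of_poly: "lp_eval (lp_of_poly P) t = poly P t"
proof -
  have "lp_eval (lp_of_poly P) t = (\<Sum>k\<in>int ` {..degree P}. lp_of_poly P k * t powi k)"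
    by (rule lp_eval_superset) (use supp_of_poly in auto)
  also have "\<dots> = (\<Sum>i\<le>degree P. coeff P i * t ^ i)"
    by (subst sum.reindex) (auto simp: lp_of_poly_def)
  also have "\<dots> = poly P t" by (simp add: poly_altdef)
  finally show ?thesis .
qed

lemma lp_eval_mult:
  assumes c: "is_lpoly c" and d: "is_lpoly d" and t: "t \<noteq> 0"
  shows "lp_eval (lp_mult c d) t = lp_eval c t * lp_eval d t"
proof -
  define S where "S = (\<lambda>(i,j). i + j) ` (supp c \<times> supp d)"
  have fS: "finite S" using c d by (auto simp: S_def is_lpoly_def)
  have fc: "finite (supp c)" "finite (supp d)" using c d by (auto simp: is_lpoly_def)
  have "lp_eval (lp_mult c d) t = (\<Sum>n\<in>S. lp_mult c d n * t powi n)"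
    by (rule lp_eval_superset[OF fS]) (use supp_mult S_def in auto)
  also have "\<dots> = (\<Sum>n\<in>S. \<Sum>k\<in>supp c. c k * d (n - k) * t powi n)"
    by (simp add: lp_mult_def sum_distrib_right)
  also have "\<dots> = (\<Sum>k\<in>supp c. c k * (\<Sum>n\<in>S. d (n - k) * t powi n))"
    by (subst sum.swap) (simp add: sum_distrib_left mult.assoc)
  also have "\<dots> = (\<Sum>k\<in>supp c. c k * (t powi k * lp_eval d t))"
  proof (rule sum.cong[OF refl])
    fix k assume k: "k \<in> supp c"
    have sub: "supp d \<subseteq> (\<lambda>n. n - k) ` S"
    proof
      fix m assume "m \<in> supp d"
      then have "k + m \<in> S" using k by (auto simp: S_def image_iff intro!: bexI[of _ "(k, m)"])
      then show "m \<in> (\<lambda>n. n - k) ` S" by (intro image_eqI[of _ _ "k + m"]) auto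
    qed
    have "(\<Sum>n\<in>S. d (n - k) * t powi n) = (\<Sum>m\<in>(\<lambda>n. n - k) ` S. d m * t powi (m + k))"
      by (subst sum.reindex) (auto simp: inj_on_def)
    also have "\<dots> = (\<Sum>m\<in>(\<lambda>n. n - k) ` S. t powi k * (d m * t powi m))"
      using t by (simp add: power_int_add algebra_simps)
    also have "\<dots> = t powi k * lp_eval d t"
      apply (subst lp_eval_superset[of "(\<lambda>n. n - k) ` S" d])
      using fS sub by (auto simp: sum_distrib_left)
    finally show "c k * (\<Sum>n\<in>S. d (n - k) * t powi n) = c k * (t powi k * lp_eval d t)" by simp
  qed
  also have "\<dots> = lp_eval c t * lp_eval d t"
    by (simp add: lp_eval_def sum_distrib_right algebra_simps)
  finally show ?thesis .
qed



lemma poly_rep: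
  assumes p: "is_lpoly p"
  shows "\<exists>N P. (\<forall>k\<in>supp p. 0 \<le> k + int N \<and> coeff P (nat (k + int N)) = p k) \<and>
               (\<forall>t. t \<noteq> 0 \<longrightarrow> poly P t = t ^ N * lp_eval p t)"
proof -
  define S where "S = supp p"
  have fS: "finite S" using p by (simp add: S_def is_lpoly_def)
  define N where "N = (\<Sum>k\<in>S. nat (- k))"
  have N: "0 \<le> k + int N" if "k \<in> S" for k
  proof -
    have "nat (- k) \<le> N" unfolding N_def using fS that by (intro member_le_sum) auto
    then show ?thesis by linarith
  qed
  define P where "P = (\<Sum>k\<in>S. monom (p k) (nat (k + int N)))"
  have "coeff P (nat (k + int N)) = p k" if k: "k \<in> S" for k
  proof -
    have "coeff P (nat (k + int N)) = (\<Sum>j\<in>S. if nat (j + int N) = nat (k + int N) then p j else 0)"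
      by (simp add: P_def coeff_sum)
    also have "\<dots> = (\<Sum>j\<in>S. if j = k then p j else 0)"
    proof (rule sum.cong[OF refl])
    fix j assume "j \<in> S"
    then have "0 \<le> j + int N" "0 \<le> k + int N" using N k by auto
    then show "(if nat (j + int N) = nat (k + int N) then p j else 0) = (if j = k then p j else 0)"
      by (simp add: eq_nat_nat_iff)
  qed
    also have "\<dots> = p k" using fS k by simp
    finally show ?thesis .
  qed
  moreover have "poly P t = t ^ N * lp_eval p t" if t: "t \<noteq> 0" for t
  proof -
    have "poly P t = (\<Sum>k\<in>S. p k * t ^ nat (k + int N))"
      by (simp add: P_def poly_sum poly_monom)
    also have "\<dots> = (\<Sum>k\<in>S. t ^ N * (p k * t powi k))"
    proof (rule sum.cong[OF refl])
      fix k assume "k \<in> S"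
      then have "t ^ nat (k + int N) = t powi (k + int N)" using N by (simp add: power_int_def)
      also have "\<dots> = t powi k * t ^ N" using t by (simp add: power_int_add)
      finally show "p k * t ^ nat (k + int N) = t ^ N * (p k * t powi k)" by simp
    qed
    also have "\<dots> = t ^ N * lp_eval p t" by (simp add: lp_eval_def S_def sum_distrib_left)
    finally show ?thesis .
  qed
  ultimately show ?thesis using N unfolding S_def by blast
qed

lemma poly_zero_nz:
  fixes P :: "complex poly"
  assumes "\<forall>t. t \<noteq> 0 \<longrightarrow> poly P t = 0"
  shows "P = 0"
proof (rule ccontr)
  assume "P \<noteq> 0"
  then have "finite {x. poly P x = 0}" by (rule poly_roots_finite)
  moreover have "- {0} \<subseteq> {x. poly P x = 0}" using assms by auto
  ultimately have "finite (- {0::complex})" by (rule finite_subset[rotated])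
  then show False by (simp add: infinite_UNIV_char_0 Compl_eq_Diff_UNIV)
qed

lemma lp_zero:
  assumes p: "is_lpoly p" and z: "\<forall>t. t \<noteq> 0 \<longrightarrow> lp_eval p t = 0"
  shows "p = (\<lambda>_. 0)"
proof -
  obtain N P where NP: "\<forall>k\<in>supp p. 0 \<le> k + int N \<and> coeff P (nat (k + int N)) = p k"
    "\<forall>t. t \<noteq> 0 \<longrightarrow> poly P t = t ^ N * lp_eval p t"
    using poly_rep[OF p] by blast
  have "P = 0" using NP(2) z by (intro poly_zero_nz) auto
  then show ?thesis using NP(1) by fastforce
qed

lemma lp_ext:
  assumes "is_lpoly c" "is_lpoly d" "\<And>t. t \<noteq> 0 \<Longrightarrow> lp_eval c t = lp_eval d t"
  shows "c = d"
proof -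
  have "lp_add c (lp_neg d) = (\<lambda>_. 0)"
    using assms by (intro lp_zero) (auto simp: lp_eval_add lp_eval_neg)
  then show ?thesis by (auto simp: lp_add_def lp_neg_def fun_eq_iff dest: fun_cong)
qed

definition lp_mono :: "int \<Rightarrow> lpoly" where "lp_mono n = (\<lambda>k. if k = n then 1 else 0)"

lemma is_lpoly_mono [simp]: "is_lpoly (lp_mono n)"
  unfolding is_lpoly_def lp_mono_def by (rule finite_subset[of _ "{n}"]) auto

lemma lp_eval_mono: "lp_eval (lp_mono n) t = t powi n"
  by (subst lp_eval_superset[of "{n}"]) (auto simp: lp_mono_def)

lemma lp_eval_hol: "is_lpoly p \<Longrightarrow> lp_eval p holomorphic_on - {0}"
  unfolding lp_eval_def by (intro holomorphic_intros) auto


lemma fe_shift: "fps_expansion f c = fps_expansion (\<lambda>u. f (c + u)) 0"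
  unfolding fps_expansion_def by (subst higher_deriv_shift_0) (simp add: o_def)

lemma fe_has:
  assumes "f holomorphic_on - {0}" "c \<noteq> 0"
  shows "(\<lambda>u. f (c + u)) has_fps_expansion fps_expansion f c"
proof -
  have "(f \<circ> (\<lambda>u. c + u)) holomorphic_on - {- c}"
  proof (rule holomorphic_on_compose_gen[where t="- {0}"])
    show "(\<lambda>u. c + u) holomorphic_on - {- c}" by (intro holomorphic_intros)
    show "(\<lambda>u. c + u) ` (- {- c}) \<subseteq> - {0}" by (auto simp: add_eq_0_iff)
  qed (rule assms(1))
  then have "(\<lambda>u. f (c + u)) has_fps_expansion fps_expansion (\<lambda>u. f (c + u)) 0"
    using assms(2) by (intro has_fps_expansion_fps_expansion[of "- {- c}"]) (auto simp: o_def)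
  then show ?thesis by (simp add: fe_shift[symmetric])
qed
lemma fe_eq:
  assumes "(\<lambda>u. f (c + u)) has_fps_expansion F"
  shows "fps_expansion f c = F"
  by (subst fe_shift) (rule fps_expansion_eqI[OF assms])

lemma fe_cong:
  assumes "\<And>t. t \<noteq> 0 \<Longrightarrow> f t = g t" "c \<noteq> 0"
  shows "fps_expansion f c = fps_expansion g c"
proof (rule fps_expansion_cong)
  have "eventually (\<lambda>w. w \<in> - {0}) (nhds c)"
    using assms by (intro eventually_nhds_in_open) auto
  then show "\<forall>\<^sub>F w in nhds c. f w = g w" by eventually_elim (use assms in auto)
qed

lemma fe_nth0: "fps_expansion f c $ 0 = f c"
  by (simp add: fps_expansion_def)

definition hol :: "(complex \<Rightarrow> complex) \<Rightarrow> bool" where "hol f \<longleftrightarrow> f holomorphic_on - {0}"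

lemma fe_mult:
  assumes "hol f" "hol g" "c \<noteq> 0"
  shows "fps_expansion (\<lambda>t. f t * g t) c = fps_expansion f c * fps_expansion g c"
proof -
  have "(\<lambda>u. f (c + u) * g (c + u)) has_fps_expansion fps_expansion f c * fps_expansion g c"
    using assms unfolding hol_def by (intro has_fps_expansion_mult fe_has) auto
  then show ?thesis by (rule fe_eq)
qed

lemma fe_add:
  assumes "hol f" "hol g" "c \<noteq> 0"
  shows "fps_expansion (\<lambda>t. f t + g t) c = fps_expansion f c + fps_expansion g c"
proof -
  have "(\<lambda>u. f (c + u) + g (c + u)) has_fps_expansion fps_expansion f c + fps_expansion g c"
    using assms unfolding hol_def by (intro has_fps_expansion_add fe_has) auto
  then show ?thesis by (rule fe_eq)
qed

lemma fe_minus: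
  assumes "hol f" "c \<noteq> 0"
  shows "fps_expansion (\<lambda>t. - f t) c = - fps_expansion f c"
proof -
  have "(\<lambda>u. - f (c + u)) has_fps_expansion - fps_expansion f c"
    using assms unfolding hol_def by (intro has_fps_expansion_minus fe_has) auto
  then show ?thesis by (rule fe_eq)
qed

lemma fe_cmult:
  assumes "hol f" "c \<noteq> 0"
  shows "fps_expansion (\<lambda>t. z * f t) c = fps_const z * fps_expansion f c"
proof -
  have "(\<lambda>u. z * f (c + u)) has_fps_expansion fps_const z * fps_expansion f c"
    using assms unfolding hol_def by (intro has_fps_expansion_cmult_left fe_has) auto
  then show ?thesis by (rule fe_eq)
qed

lemma fe_power:
  assumes "hol f" "c \<noteq> 0"
  shows "fps_expansion (\<lambda>t. f t ^ n) c = fps_expansion f c ^ n"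
proof -
  have "(\<lambda>u. f (c + u) ^ n) has_fps_expansion fps_expansion f c ^ n"
    using assms unfolding hol_def by (intro has_fps_expansion_power fe_has) auto
  then show ?thesis by (rule fe_eq)
qed

lemma fe_const: "fps_expansion (\<lambda>t. z) c = fps_const z"
  by (intro fe_eq) simp

lemma fe_X: "fps_expansion (\<lambda>t. t - c) c = fps_X"
proof (intro fe_eq)
  show "(\<lambda>u. c + u - c) has_fps_expansion fps_X"
    using has_fps_expansion_fps_X by simp
qed

lemma hol_lp: "is_lpoly p \<Longrightarrow> hol (lp_eval p)"
  by (simp add: hol_def lp_eval_hol)

lemma hol_poly [simp]: "hol (poly P)"
  unfolding hol_def by (auto intro: holomorphic_intros)

lemma hol_mult [simp]: "hol f \<Longrightarrow> hol g \<Longrightarrow> hol (\<lambda>t. f t * g t)"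
  unfolding hol_def by (auto intro: holomorphic_intros)
lemma hol_add [simp]: "hol f \<Longrightarrow> hol g \<Longrightarrow> hol (\<lambda>t. f t + g t)"
  unfolding hol_def by (auto intro: holomorphic_intros)
lemma hol_power [simp]: "hol f \<Longrightarrow> hol (\<lambda>t. f t ^ n)"
  unfolding hol_def by (auto intro: holomorphic_intros)
lemma hol_const [simp]: "hol (\<lambda>t. z)"
  unfolding hol_def by (auto intro: holomorphic_intros)
lemma hol_id [simp]: "hol (\<lambda>t. t)"
  unfolding hol_def by (auto intro: holomorphic_intros)
lemma hol_diff [simp]: "hol f \<Longrightarrow> hol g \<Longrightarrow> hol (\<lambda>t. f t - g t)"
  unfolding hol_def by (auto intro: holomorphic_intros)
lemma hol_inverse [simp]: "hol (\<lambda>t. inverse t)"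
  unfolding hol_def by (auto intro: holomorphic_intros)
lemma hol_powi [simp]: "hol (\<lambda>t. t powi n)"
  unfolding hol_def by (auto intro!: holomorphic_intros)
lemma hol_comp_inverse:
  assumes "hol f" shows "hol (\<lambda>t. f (inverse t))"
proof -
  have "(f \<circ> inverse) holomorphic_on - {0}"
    using assms unfolding hol_def
    by (intro holomorphic_on_compose_gen[of _ _ _ "- {0}"]) (auto intro: holomorphic_intros)
  then show ?thesis by (simp add: hol_def o_def)
qed


lemma taylor_fe: "taylor a p = fps_expansion (lp_eval p) a"
  by (simp add: taylor_def fps_expansion_def)

lemma taylor_add:
  assumes "is_lpoly p" "is_lpoly q" "a \<noteq> 0"
  shows "taylor a (lp_add p q) = taylor a p + taylor a q"
proof -
  have "taylor a (lp_add p q) = fps_expansion (\<lambda>t. lp_eval p t + lp_eval q t) a"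
    unfolding taylor_fe using assms by (intro fe_cong) (simp_all add: lp_eval_add)
  also have "\<dots> = taylor a p + taylor a q"
    unfolding taylor_fe using assms by (intro fe_add hol_lp)
  finally show ?thesis .
qed

lemma taylor_neg:
  assumes "is_lpoly p" "a \<noteq> 0"
  shows "taylor a (lp_neg p) = - taylor a p"
proof -
  have "taylor a (lp_neg p) = fps_expansion (\<lambda>t. - lp_eval p t) a"
    unfolding taylor_fe using assms by (intro fe_cong) (simp_all add: lp_eval_neg)
  also have "\<dots> = - taylor a p"
    unfolding taylor_fe using assms by (intro fe_minus hol_lp)
  finally show ?thesis .
qed

lemma taylor_smult:
  assumes "is_lpoly p" "a \<noteq> 0"
  shows "taylor a (lp_smult z p) = fps_const z * taylor a p"
proof -
  have "taylor a (lp_smult z p) = fps_expansion (\<lambda>t. z * lp_eval p t) a"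
    unfolding taylor_fe using assms by (intro fe_cong) (simp_all add: lp_eval_smult)
  also have "\<dots> = fps_const z * taylor a p"
    unfolding taylor_fe using assms by (intro fe_cmult hol_lp)
  finally show ?thesis .
qed

lemma taylor_mult:
  assumes "is_lpoly p" "is_lpoly q" "a \<noteq> 0"
  shows "taylor a (lp_mult p q) = taylor a p * taylor a q"
proof -
  have "taylor a (lp_mult p q) = fps_expansion (\<lambda>t. lp_eval p t * lp_eval q t) a"
    unfolding taylor_fe using assms by (intro fe_cong) (simp_all add: lp_eval_mult)
  also have "\<dots> = taylor a p * taylor a q"
    unfolding taylor_fe using assms by (intro fe_mult hol_lp)
  finally show ?thesis .
qed

definition vanish :: "nat \<Rightarrow> complex fps \<Rightarrow> bool" where "vanish L F \<longleftrightarrow> (\<forall>j<L. fps_nth F j = 0)"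

lemma vanish_mult: "vanish L G \<Longrightarrow> vanish L (F * G)"
  unfolding vanish_def by (auto simp: fps_mult_nth intro!: sum.neutral)

lemma vanish_unit: "fps_nth F 0 \<noteq> 0 \<Longrightarrow> vanish L (F * G) \<Longrightarrow> vanish L G"
proof -
  assume F: "fps_nth F 0 \<noteq> 0" and v: "vanish L (F * G)"
  have i: "inverse F * F = 1" using F by (rule inverse_mult_eq_1)
  from vanish_mult[OF v, of "inverse F"] show ?thesis by (simp add: mult.assoc[symmetric] i)
qed

lemma vanish_X: "vanish L (fps_X ^ L * G)"
  unfolding vanish_def by (simp add: fps_X_power_mult_nth)

lemma vanish_fe:
  assumes "hol g" "c \<noteq> 0" "\<And>t. t \<noteq> 0 \<Longrightarrow> f t = (t - c) ^ L * g t"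
  shows "vanish L (fps_expansion f c)"
proof -
  have "fps_expansion f c = fps_expansion (\<lambda>t. (t - c) ^ L * g t) c"
    using assms by (intro fe_cong) auto
  also have "\<dots> = fps_X ^ L * fps_expansion g c"
    using assms by (simp add: fe_mult fe_power fe_X)
  finally show ?thesis by (simp add: vanish_X)
qed

lemma poly_vanish_dvd:
  assumes "c \<noteq> 0" "vanish L (fps_expansion (poly P) c)"
  shows "[:- c, 1:] ^ L dvd P"
  using assms(2)
proof (induction L arbitrary: P)
  case 0
  then show ?case by simp
next
  case (Suc L)
  have "poly P c = 0" using Suc.prems fe_nth0[of "poly P" c] by (simp add: vanish_def)
  then obtain Q where Q: "P = [:- c, 1:] * Q" using poly_eq_0_iff_dvd by blast
  have "fps_expansion (poly P) c = fps_expansion (\<lambda>t. (t - c) * poly Q t) c"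
  proof -
    have "poly P = (\<lambda>t. (t - c) * poly Q t)" by (simp add: Q fun_eq_iff algebra_simps)
    then show ?thesis by simp
  qed
  also have "\<dots> = fps_X * fps_expansion (poly Q) c"
    using assms by (simp add: fe_mult fe_X)
  finally have "vanish L (fps_expansion (poly Q) c)"
    using Suc.prems unfolding vanish_def by (metis Suc_less_eq diff_Suc_1 fps_X_mult_nth nat.distinct(1))
  then have "[:- c, 1:] ^ L dvd Q" by (rule Suc.IH)
  then show ?case unfolding Q power_Suc by (rule mult_dvd_mono[OF dvd_refl])
qed



lemma inv_id1: "t \<noteq> 0 \<Longrightarrow> a \<noteq> 0 \<Longrightarrow> inverse t - a = (- a * inverse t) * (t - inverse a)"
  for t a :: complex by (simp add: field_simps)

lemma inv_id2: "t \<noteq> 0 \<Longrightarrow> a \<noteq> 0 \<Longrightarrow> inverse t - inverse a = (- inverse a * inverse t) * (t - a)"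
  for t a :: complex by (simp add: field_simps)

lemma U_poly:
  assumes "a \<noteq> 0" "a\<^sup>2 \<noteq> 1"
  shows "U a = [:- a, 1:] * [:- inverse a, 1:]"
  using assms by (simp add: U_def field_simps)

lemma lin_eval1: "poly [:- c, 1:] t = t - c" for c t :: complex
  by simp

lemma poly_U:
  assumes "a \<noteq> 0" "a\<^sup>2 \<noteq> 1" shows "poly (U a ^ L) t = (t - a) ^ L * (t - inverse a) ^ L"
proof -
  have "U a = [:- a, 1:] * [:- inverse a, 1:]" by (rule U_poly[OF assms])
  then show ?thesis by (simp only: poly_power poly_mult lin_eval1 power_mult_distrib)
qed

lemma poly_U1:
  assumes "a \<noteq> 0" "a\<^sup>2 \<noteq> 1" shows "poly (U a) t = (t - a) * (t - inverse a)"
proof -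
  have "U a = [:- a, 1:] * [:- inverse a, 1:]" by (rule U_poly[OF assms])
  then show ?thesis by (simp only: poly_mult lin_eval1)
qed

lemma hol_uminus [simp]: "hol f \<Longrightarrow> hol (\<lambda>t. - f t)"
  unfolding hol_def by (auto intro: holomorphic_intros)

lemma lin_eval: "poly ([:- c, 1:] ^ L * Q) t = (t - c) ^ L * poly Q t" for c t :: complex
  by (simp only: poly_power poly_mult lin_eval1)

lemma div_lemma:
  assumes p: "is_lpoly p" and c: "c \<noteq> 0" and v: "vanish L (taylor c p)"
  shows "\<exists>g. hol g \<and> (\<forall>t. t \<noteq> 0 \<longrightarrow> lp_eval p t = (t - c) ^ L * g t)"
proof -
  obtain N P where NP: "\<forall>t. t \<noteq> 0 \<longrightarrow> poly P t = t ^ N * lp_eval p t"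
    using poly_rep[OF p] by blast
  have "fps_expansion (poly P) c = fps_expansion (\<lambda>t. t ^ N * lp_eval p t) c"
    using NP c by (intro fe_cong) auto
  also have "\<dots> = fps_expansion (\<lambda>t. t ^ N) c * taylor c p"
    using c p by (simp add: fe_mult hol_lp taylor_fe)
  finally have "vanish L (fps_expansion (poly P) c)" using vanish_mult[OF v] by simp
  then have "[:- c, 1:] ^ L dvd P" by (rule poly_vanish_dvd[OF c])
  then obtain Q where Q: "P = [:- c, 1:] ^ L * Q" by (rule dvdE)
  show ?thesis
  proof (intro exI conjI allI impI)
    show "hol (\<lambda>t. poly Q t * inverse t ^ N)" by simp
    fix t :: complex assume t: "t \<noteq> 0"
    have "t ^ N * lp_eval p t = t ^ N * ((t - c) ^ L * (poly Q t * inverse t ^ N))"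
      using NP t by (simp add: Q lin_eval field_simps)
    then show "lp_eval p t = (t - c) ^ L * (poly Q t * inverse t ^ N)"
      using t by simp
  qed
qed


lemma taylor_poly_vanish:
  assumes p: "is_lpoly p" and c: "c \<noteq> 0" and v: "vanish L (taylor c p)"
    and NP: "\<forall>t. t \<noteq> 0 \<longrightarrow> poly P t = t ^ N * lp_eval p t"
  shows "vanish L (fps_expansion (poly P) c)"
proof -
  have "fps_expansion (poly P) c = fps_expansion (\<lambda>t. t ^ N * lp_eval p t) c"
    using NP c by (intro fe_cong) auto
  also have "\<dots> = fps_expansion (\<lambda>t. t ^ N) c * taylor c p"
    using c p by (simp add: fe_mult hol_lp taylor_fe)
  finally show ?thesis using vanish_mult[OF v] by simp
qed

lemma ker_core:
  assumes a: "a \<noteq> 0" "a\<^sup>2 \<noteq> 1" and p: "is_lpoly p"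
    and v1: "vanish L (taylor a p)" and v2: "vanish L (taylor a (lp_refl p))"
  shows "lp_in_ideal (U a ^ L) p"
proof -
  define b where "b = inverse a"
  have b: "b \<noteq> 0" "b \<noteq> a" using a by (auto simp: b_def power2_eq_square field_simps)
  obtain N P where NP: "\<forall>t. t \<noteq> 0 \<longrightarrow> poly P t = t ^ N * lp_eval p t"
    using poly_rep[OF p] by blast
  have "vanish L (fps_expansion (poly P) a)" by (rule taylor_poly_vanish[OF p a(1) v1 NP])
  then have "[:- a, 1:] ^ L dvd P" by (rule poly_vanish_dvd[OF a(1)])
  then obtain Q where Q: "P = [:- a, 1:] ^ L * Q" by (rule dvdE)
  obtain g where g: "hol g" "\<And>t. t \<noteq> 0 \<Longrightarrow> lp_eval (lp_refl p) t = (t - a) ^ L * g t"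
    using div_lemma[OF is_lpoly_refl[OF p] a(1) v2] by blast
  have "vanish L (taylor b p)"
    unfolding taylor_fe
  proof (rule vanish_fe[OF _ b(1)])
    show "hol (\<lambda>t. (- a * inverse t) ^ L * g (inverse t))"
      using g(1) by (simp add: hol_comp_inverse)
    fix t :: complex assume t: "t \<noteq> 0"
    have "lp_eval p t = lp_eval (lp_refl p) (inverse t)" using p by (simp add: lp_eval_refl)
    also have "\<dots> = (inverse t - a) ^ L * g (inverse t)" using t g(2)[of "inverse t"] by simp
    also have "inverse t - a = (- a * inverse t) * (t - b)" using t a by (simp add: inv_id1 b_def)
    finally show "lp_eval p t = (t - b) ^ L * ((- a * inverse t) ^ L * g (inverse t))"
      by (simp only: power_mult_distrib mult_ac)
  qed
  then have "vanish L (fps_expansion (poly P) b)" by (rule taylor_poly_vanish[OF p b(1) _ NP])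
  moreover have "fps_expansion (poly P) b = fps_expansion (\<lambda>t. t - a) b ^ L * fps_expansion (poly Q) b"
  proof -
    have "poly P = (\<lambda>t. (t - a) ^ L * poly Q t)" by (simp add: Q lin_eval fun_eq_iff)
    then show ?thesis using b by (simp add: fe_mult fe_power)
  qed
  moreover have "fps_nth (fps_expansion (\<lambda>t. t - a) b ^ L) 0 \<noteq> 0"
    using b by (simp add: fe_nth0)
  ultimately have "vanish L (fps_expansion (poly Q) b)" using vanish_unit by metis
  then have "[:- b, 1:] ^ L dvd Q" by (rule poly_vanish_dvd[OF b(1)])
  then obtain Q' where Q': "Q = [:- b, 1:] ^ L * Q'" by (rule dvdE)
  have PU: "P = U a ^ L * Q'"
    unfolding Q Q' U_poly[OF a] b_def by (simp only: power_mult_distrib mult.assoc)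
  define r where "r = lp_mult (lp_mono (- int N)) (lp_of_poly Q')"
  have r: "is_lpoly r" by (simp add: r_def)
  show ?thesis unfolding lp_in_ideal_def
  proof (intro exI conjI)
    show "p = lp_mult (lp_of_poly (U a ^ L)) r"
    proof (rule lp_ext[OF p])
      fix t :: complex assume t: "t \<noteq> 0"
      have "t ^ N * lp_eval p t = t ^ N * lp_eval (lp_mult (lp_of_poly (U a ^ L)) r) t"
        using NP t r by (simp add: lp_eval_mult lp_eval_of_poly r_def lp_eval_mono PU
             power_int_minus field_simps)
      then show "lp_eval p t = lp_eval (lp_mult (lp_of_poly (U a ^ L)) r) t" using t by simp
    qed (use r in simp)
  qed (rule r)
qed

lemma ker_conv:
  assumes a: "a \<noteq> 0" "a\<^sup>2 \<noteq> 1" and r: "is_lpoly r"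
  shows "vanish L (taylor a (lp_mult (lp_of_poly (U a ^ L)) r))"
    and "vanish L (taylor a (lp_refl (lp_mult (lp_of_poly (U a ^ L)) r)))"
proof -
  show "vanish L (taylor a (lp_mult (lp_of_poly (U a ^ L)) r))"
    unfolding taylor_fe
  proof (rule vanish_fe[OF _ a(1)])
    show "hol (\<lambda>t. (t - inverse a) ^ L * lp_eval r t)" using r by (simp add: hol_lp)
    fix t :: complex assume t: "t \<noteq> 0"
    show "lp_eval (lp_mult (lp_of_poly (U a ^ L)) r) t = (t - a) ^ L * ((t - inverse a) ^ L * lp_eval r t)"
      using t r a by (simp add: lp_eval_mult lp_eval_of_poly poly_U1 power_mult_distrib)
  qed
  show "vanish L (taylor a (lp_refl (lp_mult (lp_of_poly (U a ^ L)) r)))"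
    unfolding taylor_fe
  proof (rule vanish_fe[OF _ a(1)])
    show "hol (\<lambda>t. (inverse t - a) ^ L * (- inverse a * inverse t) ^ L * lp_eval r (inverse t))"
      using r hol_comp_inverse[OF hol_lp[OF r]] by simp
    fix t :: complex assume t: "t \<noteq> 0"
    have "lp_eval (lp_refl (lp_mult (lp_of_poly (U a ^ L)) r)) t
        = (inverse t - a) ^ L * (inverse t - inverse a) ^ L * lp_eval r (inverse t)"
      using t r a by (simp add: lp_eval_refl lp_eval_mult lp_eval_of_poly poly_U1 power_mult_distrib)
    also have "inverse t - inverse a = (- inverse a * inverse t) * (t - a)" by (rule inv_id2[OF t a(1)])
    finally show "lp_eval (lp_refl (lp_mult (lp_of_poly (U a ^ L)) r)) t =
        (t - a) ^ L * ((inverse t - a) ^ L * (- inverse a * inverse t) ^ L * lp_eval r (inverse t))"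
      by (simp only: power_mult_distrib mult_ac)
  qed
qed


lemma fe_poly_sum:
  fixes D :: "nat \<Rightarrow> complex"
  shows "fps_expansion (\<lambda>t. \<Sum>j<L. D j * (t - a) ^ j) a = (\<Sum>j<L. fps_const (D j) * fps_X ^ j)"
proof (rule fe_eq)
  have "(\<lambda>u. \<Sum>j<L. D j * u ^ j) has_fps_expansion (\<Sum>j<L. fps_const (D j) * fps_X ^ j)"
    by (intro has_fps_expansion_sum has_fps_expansion_cmult_left has_fps_expansion_fps_X_power)
  then show "(\<lambda>u. \<Sum>j<L. D j * (a + u - a) ^ j) has_fps_expansion (\<Sum>j<L. fps_const (D j) * fps_X ^ j)"
    by simp
qed

lemma nth_poly_sum:
  assumes "n < L" shows "fps_nth (\<Sum>j<L. fps_const (D j) * fps_X ^ j) n = D n"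
proof -
  have "fps_nth (\<Sum>j<L. fps_const (D j) * fps_X ^ j) n = (\<Sum>k<L. D k * (if n = k then 1 else 0))"
    by (simp add: fps_sum_nth fps_X_power_nth)
  also have "\<dots> = (\<Sum>k<L. if k = n then D k else 0)" by (rule sum.cong) auto
  also have "\<dots> = D n" using assms by simp
  finally show ?thesis .
qed

lemma interp:
  assumes a: "a \<noteq> 0" "a\<^sup>2 \<noteq> 1"
  shows "\<exists>p. is_lpoly p \<and> (\<forall>j<L. fps_nth (taylor a p) j = fps_nth A j) \<and> vanish L (taylor a (lp_refl p))"
proof -
  define b where "b = inverse a"
  have b: "b \<noteq> 0" "b \<noteq> a" using a by (auto simp: b_def power2_eq_square field_simps)
  define W where "W = fps_expansion (\<lambda>t. t - b) a ^ L"
  have W0: "fps_nth W 0 \<noteq> 0" using b by (simp add: W_def fe_nth0)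
  define D where "D = inverse W * A"
  define R where "R = (\<Sum>j<L. smult (fps_nth D j) ([:- a, 1:] ^ j))"
  define p where "p = lp_of_poly ([:- b, 1:] ^ L * R)"
  have polyR: "poly R t = (\<Sum>j<L. fps_nth D j * (t - a) ^ j)" for t
    by (simp add: R_def poly_sum poly_power lin_eval1)
  have "taylor a p = fps_expansion (\<lambda>t. (t - b) ^ L * poly R t) a"
    by (simp add: taylor_fe p_def lp_eval_of_poly[abs_def] lin_eval)
  also have "\<dots> = W * fps_expansion (poly R) a"
    using a by (simp add: fe_mult fe_power W_def)
  also have "poly R = (\<lambda>t. \<Sum>j<L. fps_nth D j * (t - a) ^ j)" by (simp add: polyR fun_eq_iff)
  also have "fps_expansion \<dots> a = (\<Sum>j<L. fps_const (fps_nth D j) * fps_X ^ j)"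
    by (rule fe_poly_sum)
  finally have tp: "taylor a p = W * (\<Sum>j<L. fps_const (fps_nth D j) * fps_X ^ j)" .
  have WD: "W * D = A" using W0 by (simp add: D_def mult.assoc[symmetric] inverse_mult_eq_1')
  have c1: "\<forall>j<L. fps_nth (taylor a p) j = fps_nth A j"
  proof (intro allI impI)
    fix j assume j: "j < L"
    have "fps_nth (taylor a p) j = (\<Sum>i=0..j. fps_nth W i * fps_nth D (j - i))"
      unfolding tp fps_mult_nth using j by (intro sum.cong refl) (simp add: nth_poly_sum)
    also have "\<dots> = fps_nth A j" by (simp add: WD[symmetric] fps_mult_nth)
    finally show "fps_nth (taylor a p) j = fps_nth A j" .
  qed
  have c2: "vanish L (taylor a (lp_refl p))"
    unfolding taylor_fe
  proof (rule vanish_fe[OF _ a(1)])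
    show "hol (\<lambda>t. (- b * inverse t) ^ L * poly R (inverse t))"
      using hol_comp_inverse[OF hol_poly[of R]] by simp
    fix t :: complex assume t: "t \<noteq> 0"
    have "lp_eval (lp_refl p) t = (inverse t - b) ^ L * poly R (inverse t)"
      by (simp add: p_def lp_eval_refl lp_eval_of_poly lin_eval)
    also have "inverse t - b = (- b * inverse t) * (t - a)"
      using inv_id2[OF t a(1)] by (simp add: b_def)
    finally show "lp_eval (lp_refl p) t = (t - a) ^ L * ((- b * inverse t) ^ L * poly R (inverse t))"
      by (simp only: power_mult_distrib mult_ac)
  qed
  show ?thesis using c1 c2 by (intro exI[of _ p]) (simp add: p_def)
qed



lemma lp_refl_add: "lp_refl (lp_add c d) = lp_add (lp_refl c) (lp_refl d)"
  by (simp add: lp_refl_def lp_add_def)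
lemma lp_refl_neg: "lp_refl (lp_neg c) = lp_neg (lp_refl c)"
  by (simp add: lp_refl_def lp_neg_def)
lemma lp_refl_smult: "lp_refl (lp_smult z c) = lp_smult z (lp_refl c)"
  by (simp add: lp_refl_def lp_smult_def)

lemma is_lpoly_zero [simp]: "is_lpoly (\<lambda>_. 0)"
  by (simp add: is_lpoly_def)

lemma OA_carrier: "x \<in> OA \<Longrightarrow> x \<in> loop_carrier"
  by (auto simp: OA_def loop_carrier_def)

lemma lp_neg_add: "lp_add (lp_neg c) (lp_neg d) = lp_neg (lp_add c d)"
  by (simp add: lp_neg_def lp_add_def fun_eq_iff)
lemma lp_neg_smult: "lp_smult z (lp_neg c) = lp_neg (lp_smult z c)"
  by (simp add: lp_neg_def lp_smult_def fun_eq_iff)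

lemma OA_add:
  assumes "x \<in> OA" "y \<in> OA" shows "loop_add x y \<in> OA"
proof -
  obtain p q where x: "x = (p, lp_refl p, q)" "is_lpoly p" "is_lpoly q" "lp_refl q = lp_neg q"
    using assms(1) by (auto simp: OA_def)
  obtain p' q' where y: "y = (p', lp_refl p', q')" "is_lpoly p'" "is_lpoly q'" "lp_refl q' = lp_neg q'"
    using assms(2) by (auto simp: OA_def)
  show ?thesis unfolding OA_def
    by (rule CollectI, rule exI[of _ "lp_add p p'"], rule exI[of _ "lp_add q q'"])
       (simp add: x y loop_add_def lp_refl_add lp_neg_add)
qed

lemma OA_smult:
  assumes "x \<in> OA" shows "loop_smult z x \<in> OA"
proof -
  obtain p q where x: "x = (p, lp_refl p, q)" "is_lpoly p" "is_lpoly q" "lp_refl q = lp_neg q"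
    using assms(1) by (auto simp: OA_def)
  show ?thesis unfolding OA_def
    by (rule CollectI, rule exI[of _ "lp_smult z p"], rule exI[of _ "lp_smult z q"])
       (simp add: x loop_smult_def lp_refl_smult lp_neg_smult)
qed

lemma OA_zero: "loop_zero \<in> OA"
  unfolding OA_def loop_zero_def by (auto simp: lp_refl_def lp_neg_def)

lemma carrier_add [simp]: "x \<in> loop_carrier \<Longrightarrow> y \<in> loop_carrier \<Longrightarrow> loop_add x y \<in> loop_carrier"
  by (cases x; cases y) (simp add: loop_carrier_def loop_add_def)
lemma carrier_smult [simp]: "x \<in> loop_carrier \<Longrightarrow> loop_smult z x \<in> loop_carrier"
  by (cases x) (simp add: loop_carrier_def loop_smult_def)
lemma carrier_br [simp]: "x \<in> loop_carrier \<Longrightarrow> y \<in> loop_carrier \<Longrightarrow> loop_br x y \<in> loop_carrier"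
  by (cases x; cases y) (simp add: loop_carrier_def loop_br_def)

lemma s_map_add:
  assumes "a \<noteq> 0" "x \<in> loop_carrier" "y \<in> loop_carrier"
  shows "s_map a (loop_add x y) = ps_add (s_map a x) (s_map a y)"
  using assms by (cases x; cases y) (simp add: loop_carrier_def loop_add_def s_map_def ps_add_def taylor_add)

lemma s_map_smult:
  assumes "a \<noteq> 0" "x \<in> loop_carrier"
  shows "s_map a (loop_smult z x) = ps_smult z (s_map a x)"
  using assms by (cases x) (simp add: loop_carrier_def loop_smult_def s_map_def ps_smult_def taylor_smult)

lemma s_map_br:
  assumes "a \<noteq> 0" "x \<in> loop_carrier" "y \<in> loop_carrier"
  shows "s_map a (loop_br x y) = ps_br (s_map a x) (s_map a y)"
  using assms by (cases x; cases y) (simp add: loop_carrier_def loop_br_def s_map_def ps_br_def taylor_add taylor_smult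
      taylor_neg taylor_mult numeral_fps_const)

lemma lp_eval_zero: "lp_eval (\<lambda>_. 0) t = 0"
  by (simp add: lp_eval_def)

lemma taylor_zero: "taylor a (\<lambda>_. 0) = 0"
  unfolding taylor_fe lp_eval_zero by (simp add: fe_const)

lemma s_map_zero: "s_map a loop_zero = (0, 0, 0)"
  by (simp add: loop_zero_def s_map_def taylor_zero)

lemma cut_cong_mult:
  assumes "fps_cutoff L F1 = fps_cutoff L F2" "fps_cutoff L G1 = fps_cutoff L G2"
  shows "fps_cutoff L (F1 * G1) = fps_cutoff L (F2 * G2)"
proof (subst fps_cutoff_eq_fps_cutoff_iff, intro allI impI)
  fix k assume k: "k < L"
  have "fps_nth (F1 * G1) k = fps_nth (fps_cutoff L F1 * fps_cutoff L G1) k"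
    using k by (simp add: fps_cutoff_left_mult_nth fps_cutoff_right_mult_nth)
  also have "\<dots> = fps_nth (fps_cutoff L F2 * fps_cutoff L G2) k" using assms by simp
  also have "\<dots> = fps_nth (F2 * G2) k"
    using k by (simp add: fps_cutoff_left_mult_nth fps_cutoff_right_mult_nth)
  finally show "fps_nth (F1 * G1) k = fps_nth (F2 * G2) k" .
qed

lemma cut_cong_diff:
  fixes F1 F2 G1 G2 :: "complex fps"
  assumes "fps_cutoff L F1 = fps_cutoff L F2" "fps_cutoff L G1 = fps_cutoff L G2"
  shows "fps_cutoff L (F1 - G1) = fps_cutoff L (F2 - G2)"
  using assms by (simp add: fps_cutoff_diff)

lemma cut_cong_2:
  fixes F1 F2 :: "complex fps"
  assumes "fps_cutoff L F1 = fps_cutoff L F2"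
  shows "fps_cutoff L (2 * F1) = fps_cutoff L (2 * F2)"
  using assms by (rule cut_cong_mult[OF refl])

lemma ps_trunc_br_cong:
  assumes "ps_trunc L X1 = ps_trunc L X2" "ps_trunc L Y1 = ps_trunc L Y2"
  shows "ps_trunc L (ps_br X1 Y1) = ps_trunc L (ps_br X2 Y2)"
proof -
  obtain a1 b1 c1 where X1: "X1 = (a1, b1, c1)" by (cases X1) auto
  obtain a2 b2 c2 where X2: "X2 = (a2, b2, c2)" by (cases X2) auto
  obtain d1 e1 f1 where Y1: "Y1 = (d1, e1, f1)" by (cases Y1) auto
  obtain d2 e2 f2 where Y2: "Y2 = (d2, e2, f2)" by (cases Y2) auto
  have h: "fps_cutoff L a1 = fps_cutoff L a2" "fps_cutoff L b1 = fps_cutoff L b2"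
     "fps_cutoff L c1 = fps_cutoff L c2" "fps_cutoff L d1 = fps_cutoff L d2"
     "fps_cutoff L e1 = fps_cutoff L e2" "fps_cutoff L f1 = fps_cutoff L f2"
    using assms by (simp_all add: X1 X2 Y1 Y2 ps_trunc_def)
  show ?thesis
    unfolding X1 X2 Y1 Y2 ps_br_def ps_trunc_def prod.case
    using h by (intro arg_cong2[where f=Pair] cut_cong_2 cut_cong_diff cut_cong_mult) assumption+
qed

lemma ps_trunc_add_cong:
  assumes "ps_trunc L X1 = ps_trunc L X2" "ps_trunc L Y1 = ps_trunc L Y2"
  shows "ps_trunc L (ps_add X1 Y1) = ps_trunc L (ps_add X2 Y2)"
  using assms
  by (cases X1; cases X2; cases Y1; cases Y2) (simp add: ps_trunc_def ps_add_def fps_cutoff_add)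

lemma ps_trunc_smult_cong:
  assumes "ps_trunc L X1 = ps_trunc L X2"
  shows "ps_trunc L (ps_smult z X1) = ps_trunc L (ps_smult z X2)"
proof -
  obtain a1 b1 c1 where X1: "X1 = (a1, b1, c1)" by (cases X1) auto
  obtain a2 b2 c2 where X2: "X2 = (a2, b2, c2)" by (cases X2) auto
  have h: "fps_cutoff L a1 = fps_cutoff L a2" "fps_cutoff L b1 = fps_cutoff L b2"
     "fps_cutoff L c1 = fps_cutoff L c2"
    using assms by (simp_all add: X1 X2 ps_trunc_def)
  show ?thesis
    unfolding X1 X2 ps_smult_def ps_trunc_def prod.case
    using h by (intro arg_cong2[where f=Pair] cut_cong_mult[OF refl]) assumption+
qed

lemma ps_trunc_eq:
  "ps_trunc L (A, B, C) = ps_trunc L (A', B', C') \<longleftrightarrow>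
     (\<forall>j<L. fps_nth A j = fps_nth A' j \<and> fps_nth B j = fps_nth B' j \<and> fps_nth C j = fps_nth C' j)"
  by (auto simp: ps_trunc_def fps_cutoff_eq_fps_cutoff_iff)

lemma ps_trunc_mono:
  assumes "K \<le> L" "ps_trunc L U1 = ps_trunc L V1"
  shows "ps_trunc K U1 = ps_trunc K V1"
  using assms by (cases U1; cases V1) (auto simp: ps_trunc_eq)

lemma ps_trunc_zero: "ps_trunc L (0, 0, 0) = (0, 0, 0)"
  by (simp add: ps_trunc_def)

lemma cut_zero_vanish: "fps_cutoff L F = 0 \<longleftrightarrow> vanish L F"
  by (auto simp: vanish_def fps_eq_iff)



lemma OA_elem:
  assumes "x \<in> OA"
  obtains p q where "x = (p, lp_refl p, q)" "is_lpoly p" "is_lpoly q" "lp_refl q = lp_neg q"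
  using assms by (auto simp: OA_def)

lemma vanish_uminus [simp]: "vanish L (- F) \<longleftrightarrow> vanish L F"
  by (simp add: vanish_def)

lemma s_mapL_zero_iff:
  "s_mapL a L (p, lp_refl p, q) = (0, 0, 0) \<longleftrightarrow>
     vanish L (taylor a p) \<and> vanish L (taylor a (lp_refl p)) \<and> vanish L (taylor a q)"
  by (simp add: s_mapL_def s_map_def ps_trunc_def cut_zero_vanish)

lemma s_mapL_0: "s_mapL a 0 x = (0, 0, 0)"
  by (cases x) (simp add: s_mapL_def s_map_def ps_trunc_def)

lemma ker_char:
  assumes a: "a \<noteq> 0" "a\<^sup>2 \<noteq> 1"
  shows "OA_ker a L = {k \<in> OA. s_mapL a L k = (0, 0, 0)}"
proof (cases "L = 0")
  case True
  then show ?thesis by (simp add: OA_ker_def s_mapL_0)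
next
  case False
  have "x \<in> OA_ideal (U a ^ L) \<longleftrightarrow> s_mapL a L x = (0, 0, 0)" if x: "x \<in> OA" for x
  proof -
    obtain p q where pq: "x = (p, lp_refl p, q)" "is_lpoly p" "is_lpoly q" "lp_refl q = lp_neg q"
      using x by (rule OA_elem)
    have tq: "taylor a (lp_refl q) = - taylor a q" using pq a by (simp add: taylor_neg)
    show ?thesis
    proof
      assume "x \<in> OA_ideal (U a ^ L)"
      then have i: "lp_in_ideal (U a ^ L) p" "lp_in_ideal (U a ^ L) q" by (auto simp: OA_ideal_def pq)
      from i(1) obtain r where r: "is_lpoly r" "p = lp_mult (lp_of_poly (U a ^ L)) r"
        by (auto simp: lp_in_ideal_def)
      from i(2) obtain r' where r': "is_lpoly r'" "q = lp_mult (lp_of_poly (U a ^ L)) r'"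
        by (auto simp: lp_in_ideal_def)
      show "s_mapL a L x = (0, 0, 0)"
        unfolding pq(1) s_mapL_zero_iff using ker_conv[OF a r(1)] ker_conv[OF a r'(1)] r r' by simp
    next
      assume "s_mapL a L x = (0, 0, 0)"
      then have v: "vanish L (taylor a p)" "vanish L (taylor a (lp_refl p))" "vanish L (taylor a q)"
        unfolding pq(1) s_mapL_zero_iff by auto
      have "lp_in_ideal (U a ^ L) p" by (rule ker_core[OF a pq(2) v(1) v(2)])
      moreover have "lp_in_ideal (U a ^ L) q" by (rule ker_core[OF a pq(3) v(3)]) (simp add: tq v(3))
      ultimately show "x \<in> OA_ideal (U a ^ L)" using x by (simp add: OA_ideal_def pq)
    qed
  qed
  then show ?thesis using False by (auto simp: OA_ker_def OA_ideal_def)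
qed

lemma ps_trunc_add: "ps_trunc L (ps_add X Y) = ps_add (ps_trunc L X) (ps_trunc L Y)"
  by (cases X; cases Y) (simp add: ps_trunc_def ps_add_def fps_cutoff_add)

lemma fc_m1: "fps_const (-1 :: complex) = -1"
  by (metis fps_const_1_eq_1 fps_const_neg)

lemma fps_cutoff_const_mult: "fps_cutoff L (fps_const z * F) = fps_const z * fps_cutoff L F"
  for F :: "complex fps"
  by (simp add: fps_eq_iff fps_mult_left_const_nth)

lemma ps_trunc_smult: "ps_trunc L (ps_smult z X) = ps_smult z (ps_trunc L X)"
  by (cases X) (simp add: ps_trunc_def ps_smult_def fps_cutoff_const_mult)

lemma s_mapL_add:
  "a \<noteq> 0 \<Longrightarrow> x \<in> loop_carrier \<Longrightarrow> y \<in> loop_carrier \<Longrightarrow>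
    s_mapL a L (loop_add x y) = ps_add (s_mapL a L x) (s_mapL a L y)"
  by (simp add: s_mapL_def s_map_add ps_trunc_add)

lemma s_mapL_smult:
  "a \<noteq> 0 \<Longrightarrow> x \<in> loop_carrier \<Longrightarrow> s_mapL a L (loop_smult z x) = ps_smult z (s_mapL a L x)"
  by (simp add: s_mapL_def s_map_smult ps_trunc_smult)

lemma loop_add_zero [simp]: "loop_add x loop_zero = x"
  by (cases x) (simp add: loop_add_def loop_zero_def lp_add_def)

lemma zero_in_ker:
  assumes a: "a \<noteq> 0" "a\<^sup>2 \<noteq> 1" shows "loop_zero \<in> OA_ker a L"
  using OA_zero by (simp add: ker_char[OF a] s_mapL_def s_map_zero ps_trunc_zero)

lemma coset_self:
  assumes a: "a \<noteq> 0" "a\<^sup>2 \<noteq> 1" shows "x \<in> OA_coset a L x"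
proof -
  have "x = loop_add x loop_zero" by simp
  then show ?thesis unfolding OA_coset_def using zero_in_ker[OF a] by blast
qed

lemma ps_add_zero [simp]: "ps_add X (0, 0, 0) = X"
  by (cases X) (simp add: ps_add_def)

lemma coset_smap:
  assumes a: "a \<noteq> 0" "a\<^sup>2 \<noteq> 1" and w: "w \<in> loop_carrier" and z: "z \<in> OA_coset a L w"
  shows "s_mapL a L z = s_mapL a L w"
proof -
  obtain k where k: "z = loop_add w k" "k \<in> OA_ker a L" using z by (auto simp: OA_coset_def)
  have "k \<in> OA" "s_mapL a L k = (0, 0, 0)" using k(2) by (auto simp: ker_char[OF a])
  then show ?thesis using a w by (simp add: k(1) s_mapL_add OA_carrier)
qed

lemma coset_OA:
  assumes a: "a \<noteq> 0" "a\<^sup>2 \<noteq> 1" and x: "x \<in> OA"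
  shows "OA_coset a L x \<subseteq> OA"
  using x by (auto simp: OA_coset_def ker_char[OF a] intro: OA_add)

lemma coset_char:
  assumes a: "a \<noteq> 0" "a\<^sup>2 \<noteq> 1" and x: "x \<in> OA"
  shows "OA_coset a L x = {y \<in> OA. s_mapL a L y = s_mapL a L x}"
proof
  show "OA_coset a L x \<subseteq> {y \<in> OA. s_mapL a L y = s_mapL a L x}"
    using coset_OA[OF a x] coset_smap[OF a OA_carrier[OF x]] by auto
next
  show "{y \<in> OA. s_mapL a L y = s_mapL a L x} \<subseteq> OA_coset a L x"
  proof safe
    fix y assume y: "y \<in> OA" "s_mapL a L y = s_mapL a L x"
    define k where "k = loop_add y (loop_smult (-1) x)"
    have kOA: "k \<in> OA" unfolding k_def using x y by (intro OA_add OA_smult)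
    have "s_mapL a L k = ps_add (s_mapL a L x) (ps_smult (-1) (s_mapL a L x))"
      unfolding k_def using a x y OA_carrier by (simp add: s_mapL_add s_mapL_smult)
    also have "\<dots> = (0, 0, 0)"
      by (cases "s_mapL a L x") (simp add: ps_add_def ps_smult_def fc_m1)
    finally have "k \<in> OA_ker a L" using kOA by (simp add: ker_char[OF a])
    moreover have "loop_add x k = y"
      unfolding k_def by (cases x; cases y) (simp add: loop_add_def loop_smult_def lp_add_def lp_smult_def)
    ultimately show "y \<in> OA_coset a L x" unfolding OA_coset_def by blast
  qed
qed

lemma surj_L:
  assumes a: "a \<noteq> 0" "a\<^sup>2 \<noteq> 1"
  shows "\<exists>x\<in>OA. s_mapL a L x = ps_trunc L Y"
proof -
  obtain A B C where Y: "Y = (A, B, C)" by (cases Y) auto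
  obtain p1 where p1: "is_lpoly p1" "\<forall>j<L. fps_nth (taylor a p1) j = fps_nth A j"
     "vanish L (taylor a (lp_refl p1))" using interp[OF a] by blast
  obtain p2 where p2: "is_lpoly p2" "\<forall>j<L. fps_nth (taylor a p2) j = fps_nth B j"
     "vanish L (taylor a (lp_refl p2))" using interp[OF a] by blast
  obtain q1 where q1: "is_lpoly q1" "\<forall>j<L. fps_nth (taylor a q1) j = fps_nth C j"
     "vanish L (taylor a (lp_refl q1))" using interp[OF a] by blast
  define p where "p = lp_add p1 (lp_refl p2)"
  define q where "q = lp_add q1 (lp_neg (lp_refl q1))"
  have pl: "is_lpoly p" "is_lpoly q" using p1 p2 q1 by (simp_all add: p_def q_def)
  have rq: "lp_refl q = lp_neg q"
    by (simp add: q_def lp_refl_def lp_add_def lp_neg_def fun_eq_iff)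
  have rp: "lp_refl p = lp_add (lp_refl p1) p2" by (simp add: p_def lp_refl_add)
  have xOA: "(p, lp_refl p, q) \<in> OA" using pl rq by (auto simp: OA_def)
  have tp: "taylor a p = taylor a p1 + taylor a (lp_refl p2)"
    using p1 p2 a by (simp add: p_def taylor_add)
  have trp: "taylor a (lp_refl p) = taylor a (lp_refl p1) + taylor a p2"
    using p1 p2 a by (simp add: rp taylor_add)
  have tq: "taylor a q = taylor a q1 + - taylor a (lp_refl q1)"
    using q1 a by (simp add: q_def taylor_add taylor_neg)
  have "s_mapL a L (p, lp_refl p, q) = ps_trunc L Y"
    unfolding s_mapL_def s_map_def prod.case Y ps_trunc_eq
    using p1 p2 q1 by (simp add: tp trp tq vanish_def)
  then show ?thesis using xOA by blast
qed



definition Phi :: "complex \<Rightarrow> (nat \<Rightarrow> loop set) \<Rightarrow> sl2ps" where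
  "Phi a X = (Abs_fps (\<lambda>j. fps_nth (fst (s_map a (SOME x. x \<in> X (Suc j)))) j),
              Abs_fps (\<lambda>j. fps_nth (fst (snd (s_map a (SOME x. x \<in> X (Suc j))))) j),
              Abs_fps (\<lambda>j. fps_nth (snd (snd (s_map a (SOME x. x \<in> X (Suc j))))) j))"

definition cmp3 :: "nat \<Rightarrow> sl2ps \<Rightarrow> complex \<times> complex \<times> complex" where
  "cmp3 j T = (fps_nth (fst T) j, fps_nth (fst (snd T)) j, fps_nth (snd (snd T)) j)"

lemma trunc_comp: "ps_trunc L T1 = ps_trunc L T2 \<longleftrightarrow> (\<forall>j<L. cmp3 j T1 = cmp3 j T2)"
  by (cases T1; cases T2) (simp add: ps_trunc_eq cmp3_def)

lemma comp_ext: "(\<And>j. cmp3 j T1 = cmp3 j T2) \<Longrightarrow> T1 = T2"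
  by (cases T1; cases T2) (simp add: cmp3_def fps_eq_iff)

lemma comp_Phi: "cmp3 j (Phi a X) = cmp3 j (s_map a (SOME x. x \<in> X (Suc j)))"
  by (simp add: Phi_def cmp3_def)

lemma PhiI:
  assumes ne: "\<And>L. Z L \<noteq> {}" and h: "\<And>L z. z \<in> Z L \<Longrightarrow> s_mapL a L z = ps_trunc L S"
  shows "Phi a Z = S"
proof (rule comp_ext)
  fix j
  define z where "z = (SOME x. x \<in> Z (Suc j))"
  have "z \<in> Z (Suc j)" unfolding z_def using ne[of "Suc j"] by (simp add: some_in_eq)
  then have "ps_trunc (Suc j) (s_map a z) = ps_trunc (Suc j) S" using h by (simp add: s_mapL_def)
  then have "cmp3 j (s_map a z) = cmp3 j S" by (simp add: trunc_comp)
  then show "cmp3 j (Phi a Z) = cmp3 j S" by (simp add: comp_Phi z_def)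
qed

context
  fixes a :: complex
  assumes a: "a \<noteq> 0" "a\<^sup>2 \<noteq> 1"
begin

lemma hat_ne: "X \<in> OA_hat a \<Longrightarrow> X L \<noteq> {}"
  by (auto simp: OA_hat_def OA_quot_def dest!: spec[of _ L] intro: coset_self[OF a])

lemma hat_OA:
  assumes X: "X \<in> OA_hat a" and x: "x \<in> X L" shows "x \<in> OA"
proof -
  have "X L \<in> OA_quot a L" using X by (simp add: OA_hat_def)
  then obtain x0 where "x0 \<in> OA" "X L = OA_coset a L x0" by (auto simp: OA_quot_def)
  then show ?thesis using coset_OA[OF a] x by blast
qed

lemma hat_coset: "X \<in> OA_hat a \<Longrightarrow> K \<le> L \<Longrightarrow> x \<in> X L \<Longrightarrow> X K = OA_coset a K x"
  by (auto simp: OA_hat_def)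

lemma hat_P:
  assumes X: "X \<in> OA_hat a" and x: "x \<in> X L"
  shows "s_mapL a L x = ps_trunc L (Phi a X)"
  unfolding s_mapL_def trunc_comp
proof (intro allI impI)
  fix j assume j: "j < L"
  define z where "z = (SOME x. x \<in> X (Suc j))"
  have "z \<in> X (Suc j)" unfolding z_def using hat_ne[OF X, of "Suc j"] by (simp add: some_in_eq)
  moreover have "X (Suc j) = OA_coset a (Suc j) x" using hat_coset[OF X _ x] j by simp
  ultimately have "s_mapL a (Suc j) z = s_mapL a (Suc j) x"
    using coset_smap[OF a OA_carrier[OF hat_OA[OF X x]]] by simp
  then have "cmp3 j (s_map a z) = cmp3 j (s_map a x)" by (simp add: s_mapL_def trunc_comp)
  then show "cmp3 j (s_map a x) = cmp3 j (Phi a X)" by (simp add: comp_Phi z_def)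
qed

lemma Phi_inj: "inj_on (Phi a) (OA_hat a)"
proof (rule inj_onI)
  fix X Y assume X: "X \<in> OA_hat a" and Y: "Y \<in> OA_hat a" and eq: "Phi a X = Phi a Y"
  show "X = Y"
  proof
    fix L
    obtain x where x: "x \<in> X L" using hat_ne[OF X] by blast
    obtain y where y: "y \<in> Y L" using hat_ne[OF Y] by blast
    have "s_mapL a L x = s_mapL a L y" using hat_P[OF X x] hat_P[OF Y y] eq by simp
    then show "X L = Y L"
      using hat_coset[OF X order.refl x] hat_coset[OF Y order.refl y]
        coset_char[OF a hat_OA[OF X x]] coset_char[OF a hat_OA[OF Y y]] by simp
  qed
qed

lemma Phi_surj: "\<exists>X\<in>OA_hat a. Phi a X = S"
proof -
  define xs where "xs = (\<lambda>L. SOME x. x \<in> OA \<and> s_mapL a L x = ps_trunc L S)"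
  have xs: "xs L \<in> OA" "s_mapL a L (xs L) = ps_trunc L S" for L
    using someI_ex[OF surj_L[OF a, of L S, unfolded Bex_def]] by (simp_all add: xs_def)
  define X where "X = (\<lambda>L. OA_coset a L (xs L))"
  have mem: "x \<in> X L \<longleftrightarrow> x \<in> OA \<and> s_mapL a L x = ps_trunc L S" for x L
    using coset_char[OF a xs(1)] xs(2) by (simp add: X_def)
  have "X \<in> OA_hat a"
    unfolding OA_hat_def mem_Collect_eq
  proof (intro allI conjI impI ballI)
    fix L show "X L \<in> OA_quot a L" using xs(1) by (simp add: X_def OA_quot_def)
  next
    fix L K x assume KL: "K \<le> L" and x: "x \<in> X L"
    then have xo: "x \<in> OA" "ps_trunc L (s_map a x) = ps_trunc L S" by (simp_all add: mem s_mapL_def)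
    have "s_mapL a K x = ps_trunc K S" using ps_trunc_mono[OF KL xo(2)] by (simp add: s_mapL_def)
    then show "X K = OA_coset a K x" using coset_char[OF a xo(1)] by (auto simp: mem)
  qed
  moreover have "Phi a X = S"
  proof (rule PhiI)
    fix L have "xs L \<in> X L" using xs[of L] by (simp add: mem)
    then show "X L \<noteq> {}" by blast
  next
    fix L z assume "z \<in> X L" then show "s_mapL a L z = ps_trunc L S" by (simp add: mem)
  qed
  ultimately show ?thesis by blast
qed

lemma Phi_bij: "bij_betw (Phi a) (OA_hat a) UNIV"
  unfolding bij_betw_def
proof
  show "inj_on (Phi a) (OA_hat a)" by (rule Phi_inj)
  have "S \<in> Phi a ` OA_hat a" for S
  proof -
    obtain X where "X \<in> OA_hat a" "Phi a X = S" using Phi_surj by blast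
    then show ?thesis by blast
  qed
  then show "Phi a ` OA_hat a = UNIV" by blast
qed

lemma s_mapL_Phi: "X \<in> OA_hat a \<Longrightarrow> x \<in> X L \<Longrightarrow> ps_trunc L (s_map a x) = ps_trunc L (Phi a X)"
  using hat_P by (simp add: s_mapL_def)

lemma Phi_br:
  assumes X: "X \<in> OA_hat a" and Y: "Y \<in> OA_hat a"
  shows "Phi a (hat_br a X Y) = ps_br (Phi a X) (Phi a Y)"
proof (rule PhiI)
  fix L
  obtain x where x: "x \<in> X L" using hat_ne[OF X] by blast
  obtain y where y: "y \<in> Y L" using hat_ne[OF Y] by blast
  have "loop_br x y \<in> hat_br a X Y L"
    unfolding hat_br_def using x y coset_self[OF a] by blast
  then show "hat_br a X Y L \<noteq> {}" by blast
next
  fix L z assume "z \<in> hat_br a X Y L"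
  then obtain x y where xy: "x \<in> X L" "y \<in> Y L" "z \<in> OA_coset a L (loop_br x y)"
    unfolding hat_br_def by blast
  have c: "x \<in> loop_carrier" "y \<in> loop_carrier"
    using hat_OA[OF X xy(1)] hat_OA[OF Y xy(2)] OA_carrier by auto
  have "s_mapL a L z = s_mapL a L (loop_br x y)"
    using coset_smap[OF a carrier_br[OF c] xy(3)] .
  also have "\<dots> = ps_trunc L (ps_br (s_map a x) (s_map a y))"
    using a c by (simp add: s_mapL_def s_map_br)
  also have "\<dots> = ps_trunc L (ps_br (Phi a X) (Phi a Y))"
    by (rule ps_trunc_br_cong[OF s_mapL_Phi[OF X xy(1)] s_mapL_Phi[OF Y xy(2)]])
  finally show "s_mapL a L z = ps_trunc L (ps_br (Phi a X) (Phi a Y))" .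
qed

lemma Phi_add:
  assumes X: "X \<in> OA_hat a" and Y: "Y \<in> OA_hat a"
  shows "Phi a (hat_add a X Y) = ps_add (Phi a X) (Phi a Y)"
proof (rule PhiI)
  fix L
  obtain x where x: "x \<in> X L" using hat_ne[OF X] by blast
  obtain y where y: "y \<in> Y L" using hat_ne[OF Y] by blast
  have "loop_add x y \<in> hat_add a X Y L"
    unfolding hat_add_def using x y coset_self[OF a] by blast
  then show "hat_add a X Y L \<noteq> {}" by blast
next
  fix L z assume "z \<in> hat_add a X Y L"
  then obtain x y where xy: "x \<in> X L" "y \<in> Y L" "z \<in> OA_coset a L (loop_add x y)"
    unfolding hat_add_def by blast
  have c: "x \<in> loop_carrier" "y \<in> loop_carrier"
    using hat_OA[OF X xy(1)] hat_OA[OF Y xy(2)] OA_carrier by auto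
  have "s_mapL a L z = s_mapL a L (loop_add x y)"
    using coset_smap[OF a carrier_add[OF c] xy(3)] .
  also have "\<dots> = ps_trunc L (ps_add (s_map a x) (s_map a y))"
    using a c by (simp add: s_mapL_def s_map_add)
  also have "\<dots> = ps_trunc L (ps_add (Phi a X) (Phi a Y))"
    by (rule ps_trunc_add_cong[OF s_mapL_Phi[OF X xy(1)] s_mapL_Phi[OF Y xy(2)]])
  finally show "s_mapL a L z = ps_trunc L (ps_add (Phi a X) (Phi a Y))" .
qed

lemma Phi_smult:
  assumes X: "X \<in> OA_hat a"
  shows "Phi a (hat_smult a z X) = ps_smult z (Phi a X)"
proof (rule PhiI)
  fix L
  obtain x where x: "x \<in> X L" using hat_ne[OF X] by blast
  have "loop_smult z x \<in> hat_smult a z X L"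
    unfolding hat_smult_def using x coset_self[OF a] by blast
  then show "hat_smult a z X L \<noteq> {}" by blast
next
  fix L w assume "w \<in> hat_smult a z X L"
  then obtain x where xy: "x \<in> X L" "w \<in> OA_coset a L (loop_smult z x)"
    unfolding hat_smult_def by blast
  have c: "x \<in> loop_carrier"
    using hat_OA[OF X xy(1)] OA_carrier by auto
  have "s_mapL a L w = s_mapL a L (loop_smult z x)"
    using coset_smap[OF a carrier_smult[OF c] xy(2)] .
  also have "\<dots> = ps_trunc L (ps_smult z (s_map a x))"
    using a c by (simp add: s_mapL_def s_map_smult)
  also have "\<dots> = ps_trunc L (ps_smult z (Phi a X))"
    by (rule ps_trunc_smult_cong[OF s_mapL_Phi[OF X xy(1)]])
  finally show "s_mapL a L w = ps_trunc L (ps_smult z (Phi a X))" .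
qed

lemma cut_zero_shift: "fps_cutoff L F = 0 \<Longrightarrow> F = fps_X ^ L * fps_shift L F"
  using fps_shift_cutoff'[of L F] by simp

lemma cut_X_power: "fps_cutoff L (fps_X ^ L * F) = 0"
  by (simp add: fps_eq_iff fps_X_power_mult_nth)

lemma Phi_ker: "Phi a ` hat_ker a L = ps_uL L"
proof
  show "Phi a ` hat_ker a L \<subseteq> ps_uL L"
  proof
    fix S assume "S \<in> Phi a ` hat_ker a L"
    then obtain X where X: "X \<in> OA_hat a" "X L = OA_ker a L" "S = Phi a X"
      by (auto simp: hat_ker_def)
    have "loop_zero \<in> X L" using X(2) zero_in_ker[OF a] by simp
    then have "s_mapL a L loop_zero = ps_trunc L (Phi a X)" by (rule hat_P[OF X(1)])
    then have "ps_trunc L (Phi a X) = ps_trunc L (0, 0, 0)" by (simp add: s_mapL_def s_map_zero)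
    moreover obtain A B C where S3: "Phi a X = (A, B, C)" by (cases "Phi a X") auto
    ultimately have S: "S = (A, B, C)" "fps_cutoff L A = 0" "fps_cutoff L B = 0" "fps_cutoff L C = 0"
      using X(3) by (simp_all add: ps_trunc_def)
    show "S \<in> ps_uL L" unfolding ps_uL_def
      using cut_zero_shift[OF S(2)] cut_zero_shift[OF S(3)] cut_zero_shift[OF S(4)] S(1) by blast
  qed
next
  show "ps_uL L \<subseteq> Phi a ` hat_ker a L"
  proof
    fix S assume "S \<in> ps_uL L"
    then obtain A B C where S: "S = (fps_X ^ L * A, fps_X ^ L * B, fps_X ^ L * C)"
      by (auto simp: ps_uL_def)
    have t0: "ps_trunc L S = (0, 0, 0)" by (simp add: S ps_trunc_def cut_X_power)
    obtain X where X: "X \<in> OA_hat a" "Phi a X = S" using Phi_surj by blast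
    obtain x where x: "x \<in> X L" using hat_ne[OF X(1)] by blast
    have "X L = OA_coset a L x" using hat_coset[OF X(1) order.refl x] .
    also have "\<dots> = {y \<in> OA. s_mapL a L y = s_mapL a L x}" by (rule coset_char[OF a hat_OA[OF X(1) x]])
    also have "s_mapL a L x = (0, 0, 0)" using hat_P[OF X(1) x] X(2) t0 by simp
    also have "{y \<in> OA. s_mapL a L y = (0, 0, 0)} = OA_ker a L" by (rule ker_char[OF a, symmetric])
    finally have "X \<in> hat_ker a L" using X(1) by (simp add: hat_ker_def)
    then show "S \<in> Phi a ` hat_ker a L" using X(2) by blast
  qed
qed

end

theorem theorem3:
  fixes a :: complex
  assumes "a \<noteq> 0" and "a \<noteq> 1" and "a \<noteq> -1"
  shows
    "(\<forall>x\<in>OA. \<forall>y\<in>OA.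
        s_map a (loop_br x y) = ps_br (s_map a x) (s_map a y) \<and>
        s_map a (loop_add x y) = ps_add (s_map a x) (s_map a y)) \<and>
     (\<forall>z. \<forall>x\<in>OA. s_map a (loop_smult z x) = ps_smult z (s_map a x)) \<and>
     (\<forall>L\<ge>1.
        (\<forall>Y. \<exists>x\<in>OA. s_mapL a L x = ps_trunc L Y) \<and>
        {x \<in> OA. s_mapL a L x = ps_trunc L (0, 0, 0)} = OA_ker a L) \<and>
     (\<exists>\<Phi>. (\<forall>X\<in>OA_hat a. \<forall>L. \<forall>x\<in>X L. s_mapL a L x = ps_trunc L (\<Phi> X)) \<and>
          bij_betw \<Phi> (OA_hat a) UNIV \<and>
          (\<forall>X\<in>OA_hat a. \<forall>Y\<in>OA_hat a.
              \<Phi> (hat_br a X Y) = ps_br (\<Phi> X) (\<Phi> Y) \<and>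
              \<Phi> (hat_add a X Y) = ps_add (\<Phi> X) (\<Phi> Y)) \<and>
          (\<forall>z. \<forall>X\<in>OA_hat a. \<Phi> (hat_smult a z X) = ps_smult z (\<Phi> X)) \<and>
          (\<forall>L. \<Phi> ` hat_ker a L = ps_uL L))"
proof -
  have a: "a \<noteq> 0" "a\<^sup>2 \<noteq> 1"
  proof -
    show "a \<noteq> 0" by fact
    show "a\<^sup>2 \<noteq> 1"
    proof
      assume "a\<^sup>2 = 1"
      then have "(a - 1) * (a + 1) = 0" by (simp add: algebra_simps power2_eq_square)
      then show False using assms by (auto simp: add_eq_0_iff minus_equation_iff)
    qed
  qed
  show ?thesis
  proof (intro conjI ballI allI impI)
    fix x y assume "x \<in> OA" "y \<in> OA"
    then show "s_map a (loop_br x y) = ps_br (s_map a x) (s_map a y)"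
      "s_map a (loop_add x y) = ps_add (s_map a x) (s_map a y)"
      using a by (simp_all add: s_map_br s_map_add OA_carrier)
  next
    fix z x assume "x \<in> OA"
    then show "s_map a (loop_smult z x) = ps_smult z (s_map a x)"
      using a by (simp add: s_map_smult OA_carrier)
  next
    fix L Y show "\<exists>x\<in>OA. s_mapL a L x = ps_trunc L Y" by (rule surj_L[OF a])
  next
    fix L :: nat
    show "{x \<in> OA. s_mapL a L x = ps_trunc L (0, 0, 0)} = OA_ker a L"
      by (simp add: ps_trunc_zero ker_char[OF a])
  next
    show "\<exists>\<Phi>. (\<forall>X\<in>OA_hat a. \<forall>L. \<forall>x\<in>X L. s_mapL a L x = ps_trunc L (\<Phi> X)) \<and>
          bij_betw \<Phi> (OA_hat a) UNIV \<and>
          (\<forall>X\<in>OA_hat a. \<forall>Y\<in>OA_hat a.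
              \<Phi> (hat_br a X Y) = ps_br (\<Phi> X) (\<Phi> Y) \<and>
              \<Phi> (hat_add a X Y) = ps_add (\<Phi> X) (\<Phi> Y)) \<and>
          (\<forall>z. \<forall>X\<in>OA_hat a. \<Phi> (hat_smult a z X) = ps_smult z (\<Phi> X)) \<and>
          (\<forall>L. \<Phi> ` hat_ker a L = ps_uL L)"
      using hat_P[OF a] Phi_bij[OF a] Phi_br[OF a] Phi_add[OF a] Phi_smult[OF a] Phi_ker[OF a]
      by (intro exI[of _ "Phi a"]) blast
  qed
qed

end
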